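(* Let $d\in\mathbb{N}$. Then $$\mathrm{WA} = \pi(\Pi) \qquad\text{and hence}\qquad \mathrm{Bad} = \mathbb{R}^d\setminus \pi(\Pi).$$
   Context: For $z\in\mathbb{R}^d$, $\|z\|$ denotes the sup-norm distance from $z$ to $\mathbb{Z}^d$. Write $\mathbb{N}=\{1,2,3,\dots\}$. $\mathrm{Bad}=\{x\in\mathbb{R}^d : \inf_{n\in\mathbb{N}} n\|nx\|^d>0\}$ is the set of badly approximable vectors, and $\mathrm{WA}=\mathbb{R}^d\setminus\mathrm{Bad}$. For $\psi:\mathbb{N}\to\mathbb{R}_{\ge 0}$, let $W(\psi)$ be the set of pairs $(x,y)\in\mathbb{R}^d\times\mathbb{R}^d$ for which $\|nx+y\|<\psi(n)$ holds for infinitely many $n\in\mathbb{N}$. $\mathcal{D}$ is the set of all non-increasing $\psi:\mathbb{N}\to\mathbb{R}_{\ge0}$ such that $\sum_n\psi(n)^d$ diverges, and $\Pi=\bigcap_{\psi\in\mathcal{D}}W(\psi)$. $\pi:\mathbb{R}^d\times\mathbb{R}^d\to\mathbb{R}^d$ is the projection $\pi(x,y)=x$. *)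

theory Defs
  imports "HOL-Analysis.Analysis"
begin

definition dist_Z :: "real \<Rightarrow> real" where
  "dist_Z t = \<bar>t - of_int (round t)\<bar>"

definition znorm :: "real ^ 'd \<Rightarrow> real" where
  "znorm z = Max (range (\<lambda>i. dist_Z (z $ i)))"

definition Bad :: "(real ^ 'd) set" where
  "Bad = {x. (INF n\<in>{1::nat..}. real n * znorm (real n *\<^sub>R x) ^ CARD('d)) > 0}"

definition WA :: "(real ^ 'd) set" where
  "WA = UNIV - Bad"

definition W :: "(nat \<Rightarrow> real) \<Rightarrow> ((real ^ 'd) \<times> (real ^ 'd)) set" where
  "W \<psi> = {(x, y). infinite {n::nat. n \<ge> 1 \<and> znorm (real n *\<^sub>R x + y) < \<psi> n}}"

text \<open>The class D (only values on N = {1,2,...} matter; psi 0 is ignored).\<close>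
definition Dcls :: "nat \<Rightarrow> (nat \<Rightarrow> real) set" where
  "Dcls d = {\<psi>. (\<forall>n\<ge>1. \<psi> n \<ge> 0) \<and> (\<forall>m n. 1 \<le> m \<longrightarrow> m \<le> n \<longrightarrow> \<psi> n \<le> \<psi> m)
              \<and> \<not> summable (\<lambda>n. \<psi> (Suc n) ^ d)}"

definition Pi_set :: "((real ^ 'd) \<times> (real ^ 'd)) set" where
  "Pi_set = (\<Inter>\<psi>\<in>Dcls CARD('d). W \<psi>)"

end

theory Submission
  imports Defs
begin


lemma dist_Z_le: "dist_Z t \<le> \<bar>t - of_int m\<bar>"
  unfolding dist_Z_def by (rule round_diff_minimal)

lemma dist_Z_nonneg: "dist_Z t \<ge> 0"
  unfolding dist_Z_def by simp

lemma dist_Z_diff: "dist_Z (s - t) \<le> dist_Z s + dist_Z t"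
proof -
  have "dist_Z (s - t) \<le> \<bar>(s - t) - of_int (round s - round t)\<bar>" by (rule dist_Z_le)
  also have "\<dots> \<le> dist_Z s + dist_Z t" unfolding dist_Z_def by simp
  finally show ?thesis .
qed

lemma znorm_ge: "dist_Z (z $ i) \<le> znorm z"
  unfolding znorm_def by (rule Max_ge) auto

lemma znorm_le: "(\<And>i. dist_Z (z $ i) \<le> B) \<Longrightarrow> znorm z \<le> B"
  unfolding znorm_def by (subst Max_le_iff) auto

lemma znorm_nonneg: "znorm z \<ge> 0"
  using znorm_ge[of z undefined] dist_Z_nonneg[of "z $ undefined"] by linarith

lemma znorm_diff: "znorm (a - b) \<le> znorm a + znorm b"
proof (rule znorm_le)
  fix i
  have "dist_Z ((a - b) $ i) \<le> dist_Z (a $ i) + dist_Z (b $ i)" using dist_Z_diff by simp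
  then show "dist_Z ((a - b) $ i) \<le> znorm a + znorm b" using znorm_ge[of a i] znorm_ge[of b i] by linarith
qed

lemma znorm_zero: "znorm z = 0 \<Longrightarrow> z $ i = of_int (round (z $ i))"
  using znorm_ge[of z i] dist_Z_nonneg[of "z $ i"] unfolding dist_Z_def by simp

lemma znorm_int: "(\<And>i. z $ i = of_int (m i)) \<Longrightarrow> znorm z = 0"
  using znorm_le[of z 0] znorm_nonneg[of z] unfolding dist_Z_def by simp

lemma Bad_lb:
  fixes x :: "real ^ 'd"
  assumes "x \<in> Bad"
  shows "\<exists>c>0. \<forall>n\<ge>1. c \<le> real n * znorm (real n *\<^sub>R x) ^ CARD('d)"
proof -
  let ?f = "\<lambda>n::nat. real n * znorm (real n *\<^sub>R x) ^ CARD('d)"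
  have bdd: "bdd_below (?f ` {1..})"
    by (rule bdd_belowI[of _ 0]) (auto simp: znorm_nonneg)
  show ?thesis using assms unfolding Bad_def
    apply (intro exI[of _ "Inf (?f ` {1..})"])
    apply (intro conjI)
     apply simp
    apply (intro allI impI)
    apply (rule cINF_lower[OF bdd])
    apply simp
    done
qed

lemma WA_small:
  fixes x :: "real ^ 'd"
  assumes "x \<notin> Bad" "\<delta> > 0"
  shows "\<exists>n\<ge>1. real n * znorm (real n *\<^sub>R x) ^ CARD('d) < \<delta>"
proof -
  let ?f = "\<lambda>n::nat. real n * znorm (real n *\<^sub>R x) ^ CARD('d)"
  have bdd: "bdd_below (?f ` {1..})"
    by (rule bdd_belowI[of _ 0]) (auto simp: znorm_nonneg)
  have "Inf (?f ` {1..}) < \<delta>" using assms unfolding Bad_def by auto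
  then obtain v where "v \<in> ?f ` {1..}" "v < \<delta>"
    using cInf_less_iff[OF _ bdd] by auto
  then show ?thesis by auto
qed

lemma psi_pos:
  assumes "\<psi> \<in> Dcls d" "d > 0" "n \<ge> 1"
  shows "\<psi> n > 0"
proof (rule ccontr)
  assume "\<not> \<psi> n > 0"
  with assms have z: "\<psi> n = 0" unfolding Dcls_def by force
  have "\<forall>m\<ge>n. \<psi> (Suc m) ^ d = 0"
  proof (intro allI impI)
    fix m assume "n \<le> m"
    then have "\<psi> (Suc m) \<le> \<psi> n" "\<psi> (Suc m) \<ge> 0" using assms unfolding Dcls_def by auto
    then show "\<psi> (Suc m) ^ d = 0" using z assms(2) by simp
  qed
  then have "summable (\<lambda>m. \<psi> (Suc m) ^ d) = summable (\<lambda>m. 0::real)"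
    by (intro summable_cong) (auto simp: eventually_sequentially)
  then show False using assms unfolding Dcls_def by simp
qed



lemma dirA:
  fixes x y :: "real ^ 'd"
  assumes "x \<in> Bad"
  shows "\<exists>\<psi>\<in>Dcls CARD('d). (x, y) \<notin> W \<psi>"
proof -
  define D where "D = CARD('d)"
  have Dpos: "D > 0" unfolding D_def by simp
  obtain c where c: "c > 0" and cb: "\<And>n. n \<ge> 1 \<Longrightarrow> c \<le> real n * znorm (real n *\<^sub>R x) ^ D"
    using Bad_lb[OF assms] unfolding D_def by blast
  define g where "g m = (if znorm (real m *\<^sub>R x + y) = 0 then 1 else znorm (real m *\<^sub>R x + y))" for m :: nat
  have gpos: "g m > 0" for m using znorm_nonneg[of "real m *\<^sub>R x + y"] unfolding g_def by auto
  have zg: "znorm (real m *\<^sub>R x + y) \<le> g m" for m unfolding g_def by auto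
  have diffeq: "real (m' - m) *\<^sub>R x = (real m' *\<^sub>R x + y) - (real m *\<^sub>R x + y)" if "m \<le> m'" for m m' :: nat
    using that by (simp add: of_nat_diff scaleR_diff_left)
  have key: "c \<le> real (m' - m) * (g m + g m') ^ D" if "m < m'" for m m'
  proof -
    have "znorm (real (m' - m) *\<^sub>R x) \<le> g m + g m'"
      using znorm_diff[of "real m' *\<^sub>R x + y" "real m *\<^sub>R x + y"] zg[of m] zg[of m'] diffeq[of m m'] that
      by simp
    then have "znorm (real (m' - m) *\<^sub>R x) ^ D \<le> (g m + g m') ^ D"
      by (intro power_mono) (auto simp: znorm_nonneg)
    then have "real (m' - m) * znorm (real (m' - m) *\<^sub>R x) ^ D \<le> real (m' - m) * (g m + g m') ^ D"
      by (intro mult_left_mono) auto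
    moreover have "c \<le> real (m' - m) * znorm (real (m' - m) *\<^sub>R x) ^ D" using cb[of "m' - m"] that by simp
    ultimately show ?thesis by linarith
  qed
  define r where "r n = Min (g ` {1..n})" for n
  have r_in: "\<exists>m\<in>{1..n}. r n = g m" if "n \<ge> 1" for n
  proof -
    have "r n \<in> g ` {1..n}" unfolding r_def using that by (intro Min_in) auto
    then show ?thesis by auto
  qed
  have r_pos: "r n > 0" if "n \<ge> 1" for n using r_in[OF that] gpos by auto
  have r_le: "r n \<le> g m" if "1 \<le> m" "m \<le> n" for m n
    unfolding r_def using that by (intro Min_le) auto
  have r_mono: "r n' \<le> r n" if "1 \<le> n" "n \<le> n'" for n n'
    unfolding r_def using that by (intro Min_antimono) auto
  have r_Suc: "r (Suc n) = min (g (Suc n)) (r n)" if "n \<ge> 1" for n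
  proof -
    have "{1..Suc n} = insert (Suc n) {1..n}" by auto
    then show ?thesis unfolding r_def using that by (simp add: Min_insert)
  qed
  have notsum: "\<not> summable (\<lambda>k. r (Suc k) ^ D)"
  proof
    assume S: "summable (\<lambda>k. r (Suc k) ^ D)"
    have recs: "\<exists>m'>N. r m' < r (m' - 1)" for N
    proof (rule ccontr)
      assume "\<not> (\<exists>m'>N. r m' < r (m' - 1))"
      then have nd: "\<And>m'. m' > N \<Longrightarrow> r (m' - 1) \<le> r m'" by (meson not_less)
      define N1 where "N1 = max N 1"
      have const: "r m = r N1" if "m \<ge> N1" for m
        using that
      proof (induction m rule: dec_induct)
        case base then show ?case by simp
      next
        case (step m)
        have "m \<ge> 1" using step(1) unfolding N1_def by simp
        then have "r (Suc m) \<le> r m" by (intro r_mono) auto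
        moreover have "r m \<le> r (Suc m)" using nd[of "Suc m"] step(1) unfolding N1_def by simp
        ultimately show ?case using step by simp
      qed
      have pos: "r N1 ^ D > 0" using r_pos[of N1] unfolding N1_def by simp
      have "eventually (\<lambda>k. r (Suc k) ^ D < r N1 ^ D) sequentially"
        using order_tendstoD(2)[OF summable_LIMSEQ_zero[OF S] pos] .
      then obtain K where K: "\<And>k. k \<ge> K \<Longrightarrow> r (Suc k) ^ D < r N1 ^ D"
        unfolding eventually_sequentially by blast
      have "r (Suc (max K N1)) = r N1" by (intro const) auto
      then show False using K[of "max K N1"] by simp
    qed
    define e where "e = c / 2 ^ D"
    have "e > 0" unfolding e_def using c by simp
    then obtain N where N: "\<And>m n. m \<ge> N \<Longrightarrow> norm (sum (\<lambda>k. r (Suc k) ^ D) {m..<n}) < e"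
      using S unfolding summable_Cauchy by blast
    obtain m1 where m1: "m1 > N + 1" "r m1 < r (m1 - 1)" using recs by blast
    obtain m' where m': "m' > m1" "r m' < r (m' - 1)" using recs by blast
    have "m' - 1 \<ge> 1" using m1 m' by simp
    then obtain m where m: "m \<in> {1..m' - 1}" "r (m' - 1) = g m" using r_in[of "m' - 1"] by blast
    have mge: "m \<ge> m1"
    proof (rule ccontr)
      assume "\<not> m \<ge> m1"
      then have "r (m1 - 1) \<le> g m" using m by (intro r_le) auto
      moreover have "r (m' - 1) \<le> r m1" using m1 m' r_mono[of m1 "m' - 1"] by linarith
      ultimately show False using m m1 by simp
    qed
    have gm': "g m' = r m'"
      using r_Suc[of "m' - 1"] m1 m' by (simp add: min_def split: if_splits)
    have rp: "r (m' - 1) > 0" using m1 m' by (intro r_pos) auto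
    have "c \<le> real (m' - m) * (g m + g m') ^ D" using key[of m m'] m by auto
    also have "\<dots> \<le> real (m' - m) * (2 * r (m' - 1)) ^ D"
      using m m' gm' gpos[of m'] by (intro mult_left_mono power_mono) auto
    also have "\<dots> = 2 ^ D * (real (m' - m) * r (m' - 1) ^ D)" by (simp add: power_mult_distrib)
    finally have "c \<le> 2 ^ D * (real (m' - m) * r (m' - 1) ^ D)" .
    then have ce: "e \<le> real (m' - m) * r (m' - 1) ^ D" unfolding e_def
      by (subst pos_divide_le_eq) (auto simp: mult.commute)
    have "real (card {m - 1..<m' - 1}) * r (m' - 1) ^ D \<le> sum (\<lambda>k. r (Suc k) ^ D) {m - 1..<m' - 1}"
    proof (rule sum_bounded_below)
      fix k assume "k \<in> {m - 1..<m' - 1}"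
      then have "r (m' - 1) \<le> r (Suc k)" using m by (intro r_mono) auto
      then show "r (m' - 1) ^ D \<le> r (Suc k) ^ D" using rp by (intro power_mono) auto
    qed
    moreover have "card {m - 1..<m' - 1} = m' - m" using m by auto
    ultimately have "e \<le> sum (\<lambda>k. r (Suc k) ^ D) {m - 1..<m' - 1}" using ce by simp
    moreover have "norm (sum (\<lambda>k. r (Suc k) ^ D) {m - 1..<m' - 1}) < e" using N mge m1 by auto
    ultimately show False by simp
  qed
  have rD: "r \<in> Dcls D"
    unfolding Dcls_def using r_pos r_mono notsum by (auto simp: less_imp_le)
  have uniq: "a = b" if "a \<ge> 1" "b \<ge> 1" "znorm (real a *\<^sub>R x + y) = 0" "znorm (real b *\<^sub>R x + y) = 0" for a b
  proof (rule ccontr)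
    assume ne: "a \<noteq> b"
    have *: "False" if "1 \<le> a" "a < b" "znorm (real a *\<^sub>R x + y) = 0" "znorm (real b *\<^sub>R x + y) = 0" for a b
    proof -
      have "znorm (real (b - a) *\<^sub>R x) \<le> 0"
        using znorm_diff[of "real b *\<^sub>R x + y" "real a *\<^sub>R x + y"] diffeq[of a b] that by simp
      then have "znorm (real (b - a) *\<^sub>R x) = 0" using znorm_nonneg by (metis antisym)
      moreover have "c \<le> real (b - a) * znorm (real (b - a) *\<^sub>R x) ^ D" using cb[of "b - a"] that by simp
      ultimately show False using c Dpos that by (simp add: zero_power of_nat_diff)
    qed
    show False using ne that *[of a b] *[of b a] by (cases "a < b") auto
  qed
  have fin: "finite {n. n \<ge> 1 \<and> znorm (real n *\<^sub>R x + y) < r n}"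
  proof -
    have sub: "{n. n \<ge> 1 \<and> znorm (real n *\<^sub>R x + y) < r n} \<subseteq> {n. n \<ge> 1 \<and> znorm (real n *\<^sub>R x + y) = 0}"
    proof
      fix n assume "n \<in> {n. n \<ge> 1 \<and> znorm (real n *\<^sub>R x + y) < r n}"
      then have "n \<ge> 1" "znorm (real n *\<^sub>R x + y) < g n" using r_le[of n n] by auto
      then show "n \<in> {n. n \<ge> 1 \<and> znorm (real n *\<^sub>R x + y) = 0}" unfolding g_def by (auto split: if_splits)
    qed
    have "finite {n. n \<ge> 1 \<and> znorm (real n *\<^sub>R x + y) = 0}"
    proof (cases "{n. n \<ge> 1 \<and> znorm (real n *\<^sub>R x + y) = 0} = {}")
      case True then show ?thesis by (metis finite.emptyI)
    next
      case False
      then obtain a where "a \<in> {n. n \<ge> 1 \<and> znorm (real n *\<^sub>R x + y) = 0}" by blast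
      then have "{n. n \<ge> 1 \<and> znorm (real n *\<^sub>R x + y) = 0} \<subseteq> {a}" using uniq by auto
      then show ?thesis using finite_subset by blast
    qed
    then show ?thesis using sub finite_subset by blast
  qed
  show ?thesis
    using rD fin unfolding W_def D_def by (intro bexI[of _ r]) auto
qed



lemma dirB_rat:
  fixes x :: "real ^ 'd"
  assumes n0: "n0 \<ge> 1" "znorm (real n0 *\<^sub>R x) = 0" and psi: "\<psi> \<in> Dcls CARD('d)"
  shows "(x, 0) \<in> W \<psi>"
proof -
  have zero: "znorm (real (Suc j * n0) *\<^sub>R x) = 0" for j
  proof (rule znorm_int)
    fix i
    have "(real n0 *\<^sub>R x) $ i = of_int (round ((real n0 *\<^sub>R x) $ i))" by (rule znorm_zero[OF n0(2)])
    then have "(real (Suc j * n0) *\<^sub>R x) $ i = real (Suc j) * of_int (round ((real n0 *\<^sub>R x) $ i))"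
      by (simp add: algebra_simps)
    then show "(real (Suc j * n0) *\<^sub>R x) $ i = of_int (int (Suc j) * round ((real n0 *\<^sub>R x) $ i))"
      by simp
  qed
  have "infinite {n::nat. n \<ge> 1 \<and> znorm (real n *\<^sub>R x + 0) < \<psi> n}"
  proof (subst infinite_nat_iff_unbounded_le, intro allI)
    fix m
    have "Suc m * n0 \<ge> m" using n0 by (metis le_add2 mult.commute mult_Suc_right mult_le_mono2 nat_mult_1_right order_trans)
    moreover have "Suc m * n0 \<ge> 1" using n0 by simp
    moreover have "\<psi> (Suc m * n0) > 0" using psi_pos[OF psi] n0 by simp
    ultimately show "\<exists>n\<ge>m. n \<in> {n::nat. n \<ge> 1 \<and> znorm (real n *\<^sub>R x + 0) < \<psi> n}"
      using zero[of m] by (intro exI[of _ "Suc m * n0"]) auto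
  qed
  then show ?thesis unfolding W_def by simp
qed



lemma dirB_irr:
  fixes x :: "real ^ 'd"
  assumes WA: "x \<notin> Bad" and nz: "\<And>n. n \<ge> 1 \<Longrightarrow> znorm (real n *\<^sub>R x) > 0"
  shows "\<exists>y. \<forall>\<psi>\<in>Dcls CARD('d). (x, y) \<in> W \<psi>"
proof -
  define D where "D = CARD('d)"
  have Dpos: "D > 0" unfolding D_def by simp
  define \<epsilon> where "\<epsilon> n = znorm (real n *\<^sub>R x)" for n :: nat
  have \<epsilon>nn: "\<epsilon> n \<ge> 0" for n unfolding \<epsilon>_def by (rule znorm_nonneg)
  define Qf where "Qf \<delta> = (SOME n. n \<ge> 1 \<and> real n * \<epsilon> n ^ D < \<delta>)" for \<delta> :: real
  have Qf: "Qf \<delta> \<ge> 1 \<and> real (Qf \<delta>) * \<epsilon> (Qf \<delta>) ^ D < \<delta>" if "\<delta> > 0" for \<delta>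
    unfolding Qf_def
    by (rule someI_ex) (use WA_small[OF WA that] in \<open>auto simp: \<epsilon>_def D_def\<close>)
  define q where "q = rec_nat (Qf 1) (\<lambda>k qk. Qf (min ((1/2) ^ Suc k) ((\<epsilon> qk / 2) ^ D)))"
  have q0: "q 0 = Qf 1" unfolding q_def by simp
  have qS: "q (Suc k) = Qf (min ((1/2) ^ Suc k) ((\<epsilon> (q k) / 2) ^ D))" for k unfolding q_def by simp
  have qprop: "q k \<ge> 1 \<and> real (q k) * \<epsilon> (q k) ^ D < (1/2) ^ k" for k
  proof (induction k)
    case 0 then show ?case using Qf[of 1] q0 by simp
  next
    case (Suc k)
    have "\<epsilon> (q k) > 0" using nz Suc unfolding \<epsilon>_def by blast
    then have "min ((1/2) ^ Suc k) ((\<epsilon> (q k) / 2) ^ D) > (0::real)" by simp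
    from Qf[OF this] show ?case unfolding qS[symmetric] by linarith
  qed
  have q1: "q k \<ge> 1" for k using qprop by blast
  have half: "\<epsilon> (q (Suc k)) \<le> \<epsilon> (q k) / 2" for k
  proof -
    have "\<epsilon> (q k) > 0" using nz q1 unfolding \<epsilon>_def by blast
    then have pos: "min ((1/2) ^ Suc k) ((\<epsilon> (q k) / 2) ^ D) > (0::real)" by simp
    have "\<epsilon> (q (Suc k)) ^ D \<le> real (q (Suc k)) * \<epsilon> (q (Suc k)) ^ D"
      using mult_right_mono[of 1 "real (q (Suc k))" "\<epsilon> (q (Suc k)) ^ D"] q1[of "Suc k"] \<epsilon>nn[of "q (Suc k)"] by simp
    also have "\<dots> < (\<epsilon> (q k) / 2) ^ D" using Qf[OF pos] unfolding qS[symmetric] by linarith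
    finally have "\<epsilon> (q (Suc k)) < \<epsilon> (q k) / 2"
      by (rule power_less_imp_less_base) (use \<open>\<epsilon> (q k) > 0\<close> in simp)
    then show ?thesis by simp
  qed
  define a where "a k = \<epsilon> (q k)" for k
  have ann: "a k \<ge> 0" for k unfolding a_def by (rule \<epsilon>nn)
  have ageo: "a (j + K) \<le> a K * (1/2) ^ j" for j K
  proof (induction j)
    case 0 then show ?case by simp
  next
    case (Suc j)
    have "a (Suc j + K) \<le> a (j + K) / 2" using half[of "j + K"] unfolding a_def by simp
    also have "\<dots> \<le> a K * (1/2) ^ j / 2" using Suc by simp
    finally show ?case by simp
  qed
  have qa: "real (q k) * a k ^ D \<le> (1/2) ^ k" for k using qprop[of k] unfolding a_def by simp
  define e where "e k = (\<chi> i. (real (q k) *\<^sub>R x) $ i - of_int (round ((real (q k) *\<^sub>R x) $ i)))" for k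
  have ebound: "\<bar>e k $ i\<bar> \<le> a k" for k i
    using znorm_ge[of "real (q k) *\<^sub>R x" i] unfolding e_def a_def \<epsilon>_def dist_Z_def by simp
  have tailsums: "(\<lambda>j. a K * (1/2) ^ j) sums (a K * 2)" for K
    using sums_mult[OF geometric_sums[of "1/2::real"], of "a K"] by simp
  have esum: "summable (\<lambda>j. e (j + K) $ i)" for K i
  proof (rule summable_comparison_test)
    show "\<exists>N. \<forall>n\<ge>N. norm (e (n + K) $ i) \<le> a K * (1/2) ^ n"
      using ebound ageo by (metis order_trans real_norm_def)
    show "summable (\<lambda>n. a K * (1/2) ^ n)" using tailsums sums_summable by blast
  qed
  have tail: "\<bar>(\<Sum>j. e (j + K) $ i)\<bar> \<le> 2 * a K" for K i
  proof -
    have s1: "(\<lambda>j. e (j + K) $ i) sums (\<Sum>j. e (j + K) $ i)" using esum summable_sums by blast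
    have "(\<Sum>j. e (j + K) $ i) \<le> a K * 2"
      using sums_le[OF _ s1 tailsums[of K]] ebound ageo by (meson abs_le_D1 order_trans)
    moreover have "- (\<Sum>j. e (j + K) $ i) \<le> a K * 2"
      using sums_le[OF _ sums_minus[OF s1] tailsums[of K]] ebound ageo
      by (meson abs_le_D2 order_trans)
    ultimately show ?thesis by linarith
  qed
  define y :: "real ^ 'd" where "y = (\<chi> i. - (\<Sum>j. e j $ i))"
  define T where "T K = (\<Sum>j<K. q j)" for K
  have close: "znorm (real (T K) *\<^sub>R x + y) \<le> 2 * a K" for K
  proof (rule znorm_le)
    fix i
    have split: "(\<Sum>j. e j $ i) = (\<Sum>j. e (j + K) $ i) + (\<Sum>j<K. e j $ i)"
      using suminf_split_initial_segment[OF esum[of 0 i], of K] by simp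
    have "(real (T K) *\<^sub>R x) $ i = (\<Sum>j<K. (real (q j) *\<^sub>R x) $ i)"
      unfolding T_def by (simp add: sum_distrib_right)
    then have "(real (T K) *\<^sub>R x + y) $ i
        = of_int (\<Sum>j<K. round ((real (q j) *\<^sub>R x) $ i)) - (\<Sum>j. e (j + K) $ i)"
      unfolding y_def using split by (simp add: e_def sum_subtractf)
    then have "dist_Z ((real (T K) *\<^sub>R x + y) $ i) \<le> \<bar>(\<Sum>j. e (j + K) $ i)\<bar>"
      using dist_Z_le[of "(real (T K) *\<^sub>R x + y) $ i" "\<Sum>j<K. round ((real (q j) *\<^sub>R x) $ i)"] by simp
    then show "dist_Z ((real (T K) *\<^sub>R x + y) $ i) \<le> 2 * a K" using tail[of K i] by linarith
  qed
  have TS: "T (Suc K) = T K + q K" for K unfolding T_def by simp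
  have Tge: "T K \<ge> K" for K
  proof (induction K)
    case 0 then show ?case by simp
  next
    case (Suc K)
    have "q K \<ge> 1" by (rule q1)
    then show ?case using Suc TS[of K] by linarith
  qed
  have Tmono: "T K \<le> T K'" if "K \<le> K'" for K K' unfolding T_def using that by (intro sum_mono2) auto
  show ?thesis
  proof (intro exI[of _ y] ballI)
    fix \<psi> assume psi: "\<psi> \<in> Dcls CARD('d)"
    show "(x, y) \<in> W \<psi>"
    proof (rule ccontr)
      assume "(x, y) \<notin> W \<psi>"
      then have "finite {n::nat. n \<ge> 1 \<and> znorm (real n *\<^sub>R x + y) < \<psi> n}" unfolding W_def by simp
      then obtain k where k: "{n::nat. n \<ge> 1 \<and> znorm (real n *\<^sub>R x + y) < \<psi> n} \<subseteq> {..<k}"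
        using finite_nat_bounded by blast
      define N where "N = max k 1"
      have N1: "N \<ge> 1" unfolding N_def by simp
      have below: "\<psi> n \<le> znorm (real n *\<^sub>R x + y)" if "n \<ge> N" for n
        using k that unfolding N_def by force
      have psinn: "\<psi> n \<ge> 0" if "n \<ge> 1" for n using psi that unfolding Dcls_def by auto
      have psimono: "\<psi> n \<le> \<psi> m" if "1 \<le> m" "m \<le> n" for m n using psi that unfolding Dcls_def by auto
      define h where "h n = (if n < T N then 0 else \<psi> n ^ D)" for n
      have hnn: "h n \<ge> 0" for n
        using psinn[of n] Tge[of N] N1 unfolding h_def by auto
      have block: "sum h {T K..<T (Suc K)} \<le> 2 ^ D * (1/2) ^ K" for K
      proof (cases "K < N")
        case True
        then have "T (Suc K) \<le> T N" by (intro Tmono) auto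
        then have "sum h {T K..<T (Suc K)} = 0" unfolding h_def by (intro sum.neutral) auto
        then show ?thesis by simp
      next
        case False
        have "sum h {T K..<T (Suc K)} \<le> real (card {T K..<T (Suc K)}) * (2 * a K) ^ D"
        proof (rule sum_bounded_above)
          fix n assume n: "n \<in> {T K..<T (Suc K)}"
          have TKN: "T K \<ge> N" using Tmono[of N K] Tge[of N] False by simp
          have "\<psi> n \<le> \<psi> (T K)" using n TKN N1 by (intro psimono) auto
          also have "\<dots> \<le> 2 * a K" using below[OF TKN] close[of K] by linarith
          finally have "\<psi> n ^ D \<le> (2 * a K) ^ D" using psinn[of n] n TKN N1 by (intro power_mono) auto
          moreover have "h n = \<psi> n ^ D" unfolding h_def using n Tmono[of N K] False by auto
          ultimately show "h n \<le> (2 * a K) ^ D" by simp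
        qed
        also have "\<dots> = 2 ^ D * (real (q K) * a K ^ D)" using TS by (simp add: power_mult_distrib)
        also have "\<dots> \<le> 2 ^ D * (1/2) ^ K" using qa[of K] by simp
        finally show ?thesis .
      qed
      have partial: "sum h {..<T K} \<le> 2 ^ (D + 1) * (1 - (1/2) ^ K)" for K
      proof (induction K)
        case 0 then show ?case unfolding T_def by simp
      next
        case (Suc K)
        have "sum h {..<T (Suc K)} = sum h {0..<T K} + sum h {T K..<T (Suc K)}"
          using sum.atLeastLessThan_concat[of 0 "T K" "T (Suc K)" h] TS by (simp add: atLeast0LessThan)
        also have "\<dots> \<le> 2 ^ (D + 1) * (1 - (1/2) ^ K) + 2 ^ D * (1/2) ^ K"
          using Suc block[of K] by (simp add: atLeast0LessThan)
        also have "\<dots> = 2 ^ (D + 1) * (1 - (1/2) ^ Suc K)" by (simp add: algebra_simps)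
        finally show ?case .
      qed
      have "summable h"
      proof (rule bounded_imp_summable[OF hnn])
        fix n
        have "(\<Sum>k\<le>n. h k) \<le> sum h {..<T (Suc n)}"
          using Tge[of "Suc n"] hnn by (intro sum_mono2) auto
        also have "\<dots> \<le> 2 ^ (D + 1) * (1 - (1/2) ^ Suc n)" by (rule partial)
        also have "\<dots> \<le> 2 ^ (D + 1)" by simp
        finally show "(\<Sum>k\<le>n. h k) \<le> 2 ^ (D + 1)" .
      qed
      moreover have "summable h = summable (\<lambda>n. \<psi> n ^ D)"
        by (intro summable_cong) (auto simp: eventually_sequentially h_def intro!: exI[of _ "T N"])
      ultimately have "summable (\<lambda>n. \<psi> (Suc n) ^ D)"
        using summable_Suc_iff[of "\<lambda>n. \<psi> n ^ D"] by simp
      then show False using psi unfolding Dcls_def D_def by simp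
    qed
  qed
qed


theorem theorem1:
  shows "(WA :: (real ^ 'd) set) = fst ` (Pi_set :: ((real ^ 'd) \<times> (real ^ 'd)) set)
         \<and> (Bad :: (real ^ 'd) set) = UNIV - fst ` (Pi_set :: ((real ^ 'd) \<times> (real ^ 'd)) set)"
proof -
  have eq: "(WA :: (real ^ 'd) set) = fst ` (Pi_set :: ((real ^ 'd) \<times> (real ^ 'd)) set)"
  proof
    show "(WA :: (real ^ 'd) set) \<subseteq> fst ` (Pi_set :: ((real ^ 'd) \<times> (real ^ 'd)) set)"
    proof
      fix x :: "real ^ 'd" assume "x \<in> WA"
      then have nb: "x \<notin> Bad" unfolding WA_def by simp
      show "x \<in> fst ` (Pi_set :: ((real ^ 'd) \<times> (real ^ 'd)) set)"
      proof (cases "\<exists>n0\<ge>1. znorm (real n0 *\<^sub>R x) = 0")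
        case True
        then obtain n0 where "n0 \<ge> 1" "znorm (real n0 *\<^sub>R x) = 0" by blast
        then have "(x, 0) \<in> (Pi_set :: ((real ^ 'd) \<times> (real ^ 'd)) set)"
          unfolding Pi_set_def using dirB_rat by blast
        then show ?thesis by force
      next
        case False
        then have "\<And>n. n \<ge> 1 \<Longrightarrow> znorm (real n *\<^sub>R x) > 0"
          using znorm_nonneg by (metis less_eq_real_def)
        then obtain y where "\<forall>\<psi>\<in>Dcls CARD('d). (x, y) \<in> W \<psi>" using dirB_irr[OF nb] by blast
        then have "(x, y) \<in> (Pi_set :: ((real ^ 'd) \<times> (real ^ 'd)) set)"
          unfolding Pi_set_def by blast
        then show ?thesis by force
      qed
    qed
    show "fst ` (Pi_set :: ((real ^ 'd) \<times> (real ^ 'd)) set) \<subseteq> (WA :: (real ^ 'd) set)"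
    proof
      fix x :: "real ^ 'd" assume "x \<in> fst ` (Pi_set :: ((real ^ 'd) \<times> (real ^ 'd)) set)"
      then obtain y where xy: "(x, y) \<in> (Pi_set :: ((real ^ 'd) \<times> (real ^ 'd)) set)" by force
      show "x \<in> WA"
      proof (rule ccontr)
        assume "x \<notin> WA"
        then have "x \<in> Bad" unfolding WA_def by simp
        then obtain \<psi> where "\<psi> \<in> Dcls CARD('d)" "(x, y) \<notin> W \<psi>" using dirA by blast
        then show False using xy unfolding Pi_set_def by blast
      qed
    qed
  qed
  then show ?thesis unfolding WA_def by auto
qed

end
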